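(* For every $n\ge0$, the priority lattice $\Pi(n)$ is a graded lattice.
   Context: For $n\ge0$ let $[n]_0=\{0,1,\dots,n\}$. A priority forest on $[n]_0$ is a rooted forest with vertex set $[n]_0$ whose component trees $T_0,T_1,\dots$ are increasing (each non-root vertex has a larger label than its parent) and satisfy: for $j<k$ every label of $T_j$ is smaller than every label of $T_k$. The priority lattice $\Pi(n)$ is the set of all priority forests on $[n]_0$ together with an extra element $\hat1$, partially ordered by $P\le P'$ iff $E(P)\subseteq E(P')$ for priority forests $P,P'$, and with $\hat1$ greater than every other element. Its bottom element $\hat0$ is the forest with no edges. *)

theory Defs
  imports "HOL-Algebra.Lattice"
begin

text \<open>A forest on vertex set {0..n} is encoded by its edge set: (p,c) means p is the parent of c.\<close>

definition conn :: "(nat \<times> nat) set \<Rightarrow> (nat \<times> nat) set" where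
  "conn E = (E \<union> E\<inverse>)\<^sup>*"

definition comp_of :: "nat \<Rightarrow> (nat \<times> nat) set \<Rightarrow> nat \<Rightarrow> nat set" where
  "comp_of n E x = {y \<in> {0..n}. (x, y) \<in> conn E}"

definition priority_forest :: "nat \<Rightarrow> (nat \<times> nat) set \<Rightarrow> bool" where
  "priority_forest n E \<longleftrightarrow>
     E \<subseteq> {0..n} \<times> {0..n} \<and>
     (\<forall>p c. (p, c) \<in> E \<longrightarrow> p < c) \<and>
     (\<forall>p p' c. (p, c) \<in> E \<and> (p', c) \<in> E \<longrightarrow> p = p') \<and>
     (\<forall>x\<in>{0..n}. \<forall>y\<in>{0..n}. comp_of n E x \<noteq> comp_of n E y \<longrightarrow>
        (\<forall>a\<in>comp_of n E x. \<forall>b\<in>comp_of n E y. a < b) \<or>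
        (\<forall>a\<in>comp_of n E x. \<forall>b\<in>comp_of n E y. b < a))"

text \<open>Elements of the priority lattice: Some E for a priority forest with edge set E,
  and None for the extra top element.\<close>
definition priority_le :: "(nat \<times> nat) set option \<Rightarrow> (nat \<times> nat) set option \<Rightarrow> bool" where
  "priority_le x y = (case y of None \<Rightarrow> True
                       | Some F \<Rightarrow> (case x of None \<Rightarrow> False | Some E \<Rightarrow> E \<subseteq> F))"

definition priority_lattice :: "nat \<Rightarrow> (nat \<times> nat) set option gorder" where
  "priority_lattice n =
     \<lparr>carrier = insert None (Some ` {E. priority_forest n E}), eq = (=), le = priority_le\<rparr>"

definition is_chain :: "'a gorder \<Rightarrow> 'a set \<Rightarrow> bool" where
  "is_chain L C \<longleftrightarrow> C \<subseteq> carrier L \<and> (\<forall>x\<in>C. \<forall>y\<in>C. le L x y \<or> le L y x)"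

definition maximal_chain :: "'a gorder \<Rightarrow> 'a set \<Rightarrow> bool" where
  "maximal_chain L C \<longleftrightarrow> is_chain L C \<and> (\<forall>D. is_chain L D \<and> C \<subseteq> D \<longrightarrow> D = C)"

definition graded :: "'a gorder \<Rightarrow> bool" where
  "graded L \<longleftrightarrow> finite (carrier L) \<and>
     (\<forall>C D. maximal_chain L C \<and> maximal_chain L D \<longrightarrow> card C = card D)"

definition graded_lattice :: "'a gorder \<Rightarrow> bool" where
  "graded_lattice L \<longleftrightarrow> lattice L \<and> graded L"

end

theory Submission imports Defs begin

definition pf :: "nat \<Rightarrow> (nat \<times> nat) set \<Rightarrow> bool" where
 "pf n E \<longleftrightarrow> E \<subseteq> {0..n} \<times> {0..n} \<and> (\<forall>p c. (p,c)\<in>E \<longrightarrow> p<c)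
   \<and> (\<forall>p p' c. (p,c)\<in>E \<and> (p',c)\<in>E \<longrightarrow> p=p')
   \<and> (\<forall>p c v. (p,c)\<in>E \<and> p<v \<and> v<c \<longrightarrow> (\<exists>q. (q,v)\<in>E))"

lemma conn_sym: "(a,b) \<in> conn E \<Longrightarrow> (b,a) \<in> conn E"
proof -
  have "sym (E \<union> E\<inverse>)" by (auto simp: sym_def)
  hence "sym ((E \<union> E\<inverse>)\<^sup>*)" by (rule sym_rtrancl)
  thus "(a,b) \<in> conn E \<Longrightarrow> (b,a) \<in> conn E" unfolding conn_def by (meson symD)
qed

lemma pf1:
  assumes P: "priority_forest n E" shows "pf n E"
proof -
  have box: "E \<subseteq> {0..n} \<times> {0..n}" and lt: "\<And>p c. (p,c)\<in>E \<Longrightarrow> p<c"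
    and up: "\<And>p p' c. (p,c)\<in>E \<Longrightarrow> (p',c)\<in>E \<Longrightarrow> p=p'"
    using P unfolding priority_forest_def by blast+
  have sep: "\<And>x y. x\<in>{0..n} \<Longrightarrow> y\<in>{0..n} \<Longrightarrow> comp_of n E x \<noteq> comp_of n E y \<Longrightarrow>
        (\<forall>a\<in>comp_of n E x. \<forall>b\<in>comp_of n E y. a < b) \<or>
        (\<forall>a\<in>comp_of n E x. \<forall>b\<in>comp_of n E y. b < a)"
    using P unfolding priority_forest_def by blast
  have "\<exists>q. (q,v)\<in>E" if e: "(p,c)\<in>E" and pv: "p<v" and vc: "v<c" for p c v
  proof (rule ccontr)
    assume nv: "\<not> (\<exists>q. (q,v)\<in>E)"
    have D: "(v,y) \<in> E\<^sup>*" if "(v,y) \<in> conn E" for y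
      using that unfolding conn_def
    proof (induction rule: rtrancl_induct)
      case base then show ?case by simp
    next
      case (step y z)
      show ?case
      proof (cases "(y,z) \<in> E")
        case True then show ?thesis using step by auto
      next
        case False
        hence zy: "(z,y) \<in> E" using step by auto
        have "y \<noteq> v" using nv zy by auto
        hence "(v,y) \<in> E\<^sup>+" using step.IH by (auto simp: rtrancl_eq_or_trancl)
        then obtain w where "(v,w) \<in> E\<^sup>*" "(w,y) \<in> E" by (meson tranclD2)
        with up[OF zy] show ?thesis by auto
      qed
    qed
    have ge: "v \<le> y" if "(v,y) \<in> E\<^sup>*" for y
      using that by (induction rule: rtrancl_induct) (auto dest: lt)
    have cn: "c \<le> n" "p \<le> n" using e box by auto
    have vn: "v \<le> n" using vc cn by simp
    have pc: "p \<in> comp_of n E p" "c \<in> comp_of n E p"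
      using cn e unfolding comp_of_def conn_def by auto
    have vv: "v \<in> comp_of n E v" using vn unfolding comp_of_def conn_def by auto
    have "p \<notin> comp_of n E v" using ge D pv unfolding comp_of_def by fastforce
    hence "comp_of n E v \<noteq> comp_of n E p" using pc by auto
    from sep[OF _ _ this] vn cn have
      "(\<forall>a\<in>comp_of n E v. \<forall>b\<in>comp_of n E p. a < b) \<or>
        (\<forall>a\<in>comp_of n E v. \<forall>b\<in>comp_of n E p. b < a)" by auto
    thus False using pc vv pv vc by force
  qed
  thus ?thesis unfolding pf_def using box lt up by blast
qed

definition rt :: "(nat \<times> nat) set \<Rightarrow> nat \<Rightarrow> nat" where
  "rt E x = Max {r. r \<le> x \<and> (\<nexists>q. (q,r)\<in>E)}"

lemma pf2:
  assumes P: "pf n E" shows "priority_forest n E"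
proof -
  have box: "E \<subseteq> {0..n} \<times> {0..n}" and lt: "\<And>p c. (p,c)\<in>E \<Longrightarrow> p<c"
    and up: "\<And>p p' c. (p,c)\<in>E \<Longrightarrow> (p',c)\<in>E \<Longrightarrow> p=p'"
    and btw: "\<And>p c v. (p,c)\<in>E \<Longrightarrow> p<v \<Longrightarrow> v<c \<Longrightarrow> \<exists>q. (q,v)\<in>E"
    using P unfolding pf_def by blast+
  define R where "R x = {r. r \<le> x \<and> (\<nexists>q. (q,r)\<in>E)}" for x
  have fin: "finite (R x)" for x unfolding R_def by auto
  have ne: "0 \<in> R x" for x unfolding R_def using lt by blast
  have rtR: "rt E x = Max (R x)" for x unfolding rt_def R_def by simp
  have rt1: "rt E x \<in> R x" for x using fin ne rtR by (metis Max_in empty_iff)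
  have rt2: "r \<in> R x \<Longrightarrow> r \<le> rt E x" for r x using fin rtR by simp
  have rtle: "rt E x \<le> x" for x using rt1 unfolding R_def by auto
  have rtroot: "\<nexists>q. (q, rt E x)\<in>E" for x using rt1 unfolding R_def by auto
  have mono: "x \<le> y \<Longrightarrow> rt E x \<le> rt E y" for x y
    using rt1[of x] rt2[of "rt E x" y] unfolding R_def by auto
  have edge: "rt E p = rt E c" if e: "(p,c)\<in>E" for p c
  proof -
    have "p < c" using lt e by simp
    hence a: "rt E p \<le> rt E c" using mono by simp
    have "rt E c \<noteq> c" using rtroot[of c] e by metis
    hence "rt E c < c" using rtle[of c] by simp
    moreover have "\<not> (p < rt E c \<and> rt E c < c)" using btw[OF e] rtroot[of c] by metis
    ultimately have "rt E c \<le> p" by simp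
    hence "rt E c \<in> R p" using rtroot[of c] unfolding R_def by auto
    hence "rt E c \<le> rt E p" by (rule rt2)
    with a show ?thesis by simp
  qed
  have conn_rt: "rt E x = rt E y" if "(x,y) \<in> conn E" for x y
    using that unfolding conn_def
    by (induction rule: rtrancl_induct) (auto dest: edge)
  have rt_conn: "(rt E x, x) \<in> conn E" for x
  proof (induction x rule: less_induct)
    case (less x)
    show ?case
    proof (cases "\<exists>q. (q,x)\<in>E")
      case False
      hence "x \<in> R x" unfolding R_def by auto
      hence "rt E x = x" using rt2 rtle by (simp add: le_antisym)
      then show ?thesis unfolding conn_def by simp
    next
      case True
      then obtain q where q: "(q,x)\<in>E" by blast
      hence "q < x" using lt by simp
      hence "(rt E q, q) \<in> conn E" using less by simp
      moreover have "rt E q = rt E x" using edge[OF q] .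
      ultimately show ?thesis using q unfolding conn_def
        by (metis UnCI rtrancl.rtrancl_into_rtrancl)
    qed
  qed
  have conn_iff: "(x,y) \<in> conn E \<longleftrightarrow> rt E x = rt E y" for x y
  proof
    assume "rt E x = rt E y"
    then show "(x,y) \<in> conn E" using rt_conn[of x] rt_conn[of y] conn_sym[of "rt E x" x E]
      unfolding conn_def by (metis rtrancl_trans)
  qed (rule conn_rt)
  have comp: "comp_of n E x = {y\<in>{0..n}. rt E y = rt E x}" for x
    unfolding comp_of_def conn_iff by auto
  have sep: "(\<forall>a\<in>comp_of n E x. \<forall>b\<in>comp_of n E y. a < b) \<or>
        (\<forall>a\<in>comp_of n E x. \<forall>b\<in>comp_of n E y. b < a)"
    if "comp_of n E x \<noteq> comp_of n E y" for x y
  proof -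
    have "rt E x \<noteq> rt E y" using that comp by auto
    hence "rt E x < rt E y \<or> rt E y < rt E x" by auto
    thus ?thesis unfolding comp using mono by (metis (mono_tags, lifting) leI leD mem_Collect_eq)
  qed
  show ?thesis unfolding priority_forest_def using box lt up sep by blast
qed

lemma pf_eq: "priority_forest n E = pf n E" using pf1 pf2 by blast

lemma pf_eq': "priority_forest n = pf n" using pf_eq by blast

lemma carrier_L: "carrier (priority_lattice n) = insert None (Some ` {E. pf n E})"
  unfolding priority_lattice_def by (simp add: pf_eq')
lemma le_L: "le (priority_lattice n) = priority_le"
  unfolding priority_lattice_def by simp
lemma eq_L: "eq (priority_lattice n) = (=)"
  unfolding priority_lattice_def by simp

lemma pf_union:
  assumes "pf n E" "pf n F" "\<And>p p' c. (p,c)\<in>E\<union>F \<Longrightarrow> (p',c)\<in>E\<union>F \<Longrightarrow> p=p'"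
  shows "pf n (E\<union>F)"
  unfolding pf_def
proof (intro conjI)
  show "E \<union> F \<subseteq> {0..n} \<times> {0..n}" using assms unfolding pf_def by blast
  show "\<forall>p c. (p,c)\<in>E \<union> F \<longrightarrow> p<c" using assms unfolding pf_def by blast
  show "\<forall>p p' c. (p,c)\<in>E \<union> F \<and> (p',c)\<in>E \<union> F \<longrightarrow> p=p'" using assms(3) by blast
  show "\<forall>p c v. (p,c)\<in>E \<union> F \<and> p<v \<and> v<c \<longrightarrow> (\<exists>q. (q,v)\<in>E \<union> F)"
  proof (intro allI impI)
    fix p c v assume h: "(p,c)\<in>E \<union> F \<and> p<v \<and> v<c"
    show "\<exists>q. (q,v)\<in>E \<union> F"
    proof (cases "(p,c) \<in> E")
      case True
      with h assms(1) obtain q where "(q,v)\<in>E" unfolding pf_def by blast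
      thus ?thesis by blast
    next
      case False
      with h assms(2) obtain q where "(q,v)\<in>F" unfolding pf_def by blast
      thus ?thesis by blast
    qed
  qed
qed

lemma pf_Union:
  assumes "\<And>H. H \<in> S \<Longrightarrow> pf n H" "\<Union>S \<subseteq> G" "pf n G"
  shows "pf n (\<Union>S)"
proof -
  have a: "\<And>H. H \<in> S \<Longrightarrow> H \<subseteq> {0..n} \<times> {0..n} \<and> (\<forall>p c. (p,c)\<in>H \<longrightarrow> p<c)
   \<and> (\<forall>p c v. (p,c)\<in>H \<and> p<v \<and> v<c \<longrightarrow> (\<exists>q. (q,v)\<in>H))"
    using assms(1) unfolding pf_def by blast
  have b: "\<forall>p p' c. (p,c)\<in>G \<and> (p',c)\<in>G \<longrightarrow> p=p'" using assms(3) unfolding pf_def by blast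
  show ?thesis unfolding pf_def
  proof (intro conjI)
    show "\<Union>S \<subseteq> {0..n} \<times> {0..n}" using a by blast
    show "\<forall>p c. (p,c)\<in>\<Union>S \<longrightarrow> p<c" using a by blast
    show "\<forall>p p' c. (p,c)\<in>\<Union>S \<and> (p',c)\<in>\<Union>S \<longrightarrow> p=p'" using b assms(2) by blast
    show "\<forall>p c v. (p,c)\<in>\<Union>S \<and> p<v \<and> v<c \<longrightarrow> (\<exists>q. (q,v)\<in>\<Union>S)"
    proof (intro allI impI)
      fix p c v assume "(p,c)\<in>\<Union>S \<and> p<v \<and> v<c"
      then obtain H where "H \<in> S" "(p,c)\<in>H" "p<v" "v<c" by blast
      with a obtain q where "(q,v) \<in> H" by blast
      thus "\<exists>q. (q,v)\<in>\<Union>S" using \<open>H \<in> S\<close> by blast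
    qed
  qed
qed

lemma po: "partial_order (priority_lattice n)"
  apply unfold_locales
  apply (auto simp: eq_L le_L priority_le_def split: option.splits)
  done

lemma lat: "lattice (priority_lattice n)"
proof -
  interpret partial_order "priority_lattice n" by (rule po)
  show ?thesis
  proof (unfold_locales)
    fix x y assume x: "x \<in> carrier (priority_lattice n)" and y: "y \<in> carrier (priority_lattice n)"
    show "\<exists>s. least (priority_lattice n) s (Upper (priority_lattice n) {x, y})"
    proof (cases "\<exists>E F. x = Some E \<and> y = Some F \<and> pf n (E \<union> F)")
      case True
      then obtain E F where xy: "x = Some E" "y = Some F" "pf n (E\<union>F)" by blast
      show ?thesis
        apply (rule exI[of _ "Some (E\<union>F)"])
        using xy x y
        by (auto simp: least_def Upper_def carrier_L le_L priority_le_def split: option.splits)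
    next
      case False
      have "\<forall>u \<in> Upper (priority_lattice n) {x, y}. u = None"
      proof
        fix u assume u: "u \<in> Upper (priority_lattice n) {x, y}"
        show "u = None"
        proof (rule ccontr)
          assume "u \<noteq> None"
          then obtain G where G: "u = Some G" "pf n G" using u by (auto simp: Upper_def carrier_L)
          have "x \<noteq> None" "y \<noteq> None" using u G x y
            by (auto simp: Upper_def carrier_L le_L priority_le_def)
          then obtain E F where xy: "x = Some E" "y = Some F" "pf n E" "pf n F" using x y
            by (auto simp: carrier_L)
          have "E \<subseteq> G" "F \<subseteq> G" using u G xy x y
            by (auto simp: Upper_def carrier_L le_L priority_le_def)
          moreover have up: "\<forall>p p' c. (p,c)\<in>G \<and> (p',c)\<in>G \<longrightarrow> p=p'"
            using G(2) unfolding pf_def by blast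
          ultimately have "pf n (E\<union>F)"
            by (intro pf_union[OF xy(3,4)]) blast
          thus False using False xy by blast
        qed
      qed
      moreover have "None \<in> Upper (priority_lattice n) {x, y}"
        using x y by (auto simp: Upper_def carrier_L le_L priority_le_def split: option.splits)
      ultimately have "least (priority_lattice n) None (Upper (priority_lattice n) {x, y})"
        unfolding least_def le_L using Upper_closed[of "priority_lattice n" "{x,y}"]
        by (auto simp: priority_le_def)
      thus ?thesis by blast
    qed
  next
    fix x y assume x: "x \<in> carrier (priority_lattice n)" and y: "y \<in> carrier (priority_lattice n)"
    show "\<exists>s. greatest (priority_lattice n) s (Lower (priority_lattice n) {x, y})"
    proof (cases "x = None \<or> y = None")
      case True
      then show ?thesis
      proof
        assume "x = None" thus ?thesis
          apply (intro exI[of _ y])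
          using x y by (auto simp: greatest_def Lower_def carrier_L le_L priority_le_def split: option.splits)
      next
        assume "y = None" thus ?thesis
          apply (intro exI[of _ x])
          using x y by (auto simp: greatest_def Lower_def carrier_L le_L priority_le_def split: option.splits)
      qed
    next
      case False
      then obtain E F where xy: "x = Some E" "y = Some F" "pf n E" "pf n F" using x y
        by (auto simp: carrier_L)
      define M where "M = \<Union>{H. pf n H \<and> H \<subseteq> E \<inter> F}"
      have pM: "pf n M" unfolding M_def by (rule pf_Union[OF _ _ xy(3)]) auto
      have "M \<subseteq> E" "M \<subseteq> F" unfolding M_def by auto
      moreover have "\<And>H. pf n H \<Longrightarrow> H \<subseteq> E \<Longrightarrow> H \<subseteq> F \<Longrightarrow> H \<subseteq> M" unfolding M_def by auto
      ultimately have MF: "M \<subseteq> E" "M \<subseteq> F" and MH: "\<And>H. pf n H \<Longrightarrow> H \<subseteq> E \<Longrightarrow> H \<subseteq> F \<Longrightarrow> H \<subseteq> M"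
        by blast+
      have "Some M \<in> Lower (priority_lattice n) {x, y}"
        unfolding Lower_def using MF pM xy by (auto simp: carrier_L le_L priority_le_def)
      moreover have "le (priority_lattice n) l (Some M)" if l: "l \<in> Lower (priority_lattice n) {x, y}" for l
      proof -
        have lc: "l \<in> carrier (priority_lattice n)" and lx: "priority_le l x" and ly: "priority_le l y"
          using l xy x y unfolding Lower_def le_L by (auto simp del: priority_le_def)
        obtain H where H: "l = Some H" using lx xy by (cases l) (auto simp: priority_le_def)
        have "pf n H" using lc H by (auto simp: carrier_L)
        moreover have "H \<subseteq> E" "H \<subseteq> F" using lx ly H xy by (auto simp: priority_le_def)
        ultimately show ?thesis using MH H by (simp add: le_L priority_le_def)
      qed
      ultimately have "greatest (priority_lattice n) (Some M) (Lower (priority_lattice n) {x, y})"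
        unfolding greatest_def using Lower_closed[of "priority_lattice n" "{x,y}"] by blast
      thus ?thesis by blast
    qed
  qed
qed


lemma pfD: assumes "pf n E"
  shows "E \<subseteq> {0..n} \<times> {0..n}" "\<And>p c. (p,c)\<in>E \<Longrightarrow> p<c"
    "\<And>p p' c. (p,c)\<in>E \<Longrightarrow> (p',c)\<in>E \<Longrightarrow> p=p'"
    "\<And>p c v. (p,c)\<in>E \<Longrightarrow> p<v \<Longrightarrow> v<c \<Longrightarrow> \<exists>q. (q,v)\<in>E"
  using assms unfolding pf_def by blast+

lemma pf_finite: "pf n E \<Longrightarrow> finite E"
  unfolding pf_def by (meson finite_SigmaI finite_atLeastAtMost finite_subset)

lemma pf_card_snd: assumes "pf n E" shows "card (snd ` E) = card E" "snd ` E \<subseteq> {1..n}"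
proof -
  have "inj_on snd E" unfolding inj_on_def using pfD(3)[OF assms] by auto
  thus "card (snd ` E) = card E" by (rule card_image)
  show "snd ` E \<subseteq> {1..n}"
  proof
    fix c assume "c \<in> snd ` E"
    then obtain p where "(p,c) \<in> E" by auto
    thus "c \<in> {1..n}" using assms unfolding pf_def by fastforce
  qed
qed

lemma pf_card: "pf n E \<Longrightarrow> card E \<le> n"
  using pf_card_snd[of n E] card_mono[of "{1..n}" "snd ` E"] by simp

lemma ext1: assumes P: "pf n E" and k: "card E < n"
  shows "\<exists>G. pf n G \<and> E \<subset> G \<and> card G = Suc (card E)"
proof -
  have "card (snd ` E) < card {1..n}" using pf_card_snd[OF P] k by simp
  hence "\<not> {1..n} \<subseteq> snd ` E" using card_mono[OF finite_imageI[OF pf_finite[OF P]], of "{1..n}" snd] by linarith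
  then obtain c where c: "c \<in> {1..n}" "c \<notin> snd ` E" by blast
  hence nc: "\<And>q. (q,c) \<notin> E" by force
  define G where "G = insert (c-1, c) E"
  have "pf n G" unfolding pf_def
  proof (intro conjI)
    show "G \<subseteq> {0..n} \<times> {0..n}" using pfD(1)[OF P] c unfolding G_def by auto
    show "\<forall>a b. (a,b)\<in>G \<longrightarrow> a<b" using pfD(2)[OF P] c unfolding G_def by auto
    show "\<forall>a a' b. (a,b)\<in>G \<and> (a',b)\<in>G \<longrightarrow> a=a'" using pfD(3)[OF P] nc unfolding G_def by blast
    show "\<forall>a b v. (a,b)\<in>G \<and> a<v \<and> v<b \<longrightarrow> (\<exists>q. (q,v)\<in>G)"
    proof (intro allI impI)
      fix a b v assume h: "(a,b)\<in>G \<and> a<v \<and> v<b"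
      show "\<exists>q. (q,v)\<in>G"
      proof (cases "(a,b) \<in> E")
        case True
        then show ?thesis using pfD(4)[OF P] h unfolding G_def by blast
      next
        case False
        hence "a = c - 1" "b = c" using h G_def by auto
        thus ?thesis using h by linarith
      qed
    qed
  qed
  moreover have "E \<subset> G" using nc G_def by auto
  moreover have "card G = Suc (card E)" using nc pf_finite[OF P] G_def by simp
  ultimately show ?thesis by blast
qed

lemma ext2: assumes PE: "pf n E" and PF: "pf n F" and EF: "E \<subset> F"
  shows "\<exists>G. pf n G \<and> E \<subset> G \<and> G \<subseteq> F \<and> card G = Suc (card E)"
proof -
  have "\<exists>c p. (p,c) \<in> F - E" using EF by auto
  define c0 where "c0 = (LEAST c. \<exists>p. (p,c) \<in> F - E)"
  have "\<exists>p. (p,c0) \<in> F - E" unfolding c0_def using \<open>\<exists>c p. (p,c) \<in> F - E\<close> by (rule LeastI_ex)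
  then obtain p where p: "(p,c0) \<in> F" "(p,c0) \<notin> E" by blast
  have least: "\<And>q v. (q,v) \<in> F - E \<Longrightarrow> c0 \<le> v" unfolding c0_def by (metis Least_le)
  have nc: "\<And>q. (q,c0) \<notin> E"
  proof
    fix q assume "(q,c0) \<in> E"
    hence "(q,c0) \<in> F" using EF by auto
    hence "q = p" using pfD(3)[OF PF] p by blast
    thus False using p \<open>(q,c0) \<in> E\<close> by simp
  qed
  define G where "G = insert (p, c0) E"
  have "pf n G" unfolding pf_def
  proof (intro conjI)
    show "G \<subseteq> {0..n} \<times> {0..n}" using PE PF p unfolding pf_def G_def by auto
    show "\<forall>a b. (a,b)\<in>G \<longrightarrow> a<b" using PE PF p unfolding pf_def G_def by auto
    show "\<forall>a a' b. (a,b)\<in>G \<and> (a',b)\<in>G \<longrightarrow> a=a'" using pfD(3)[OF PE] nc unfolding G_def by blast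
    show "\<forall>a b v. (a,b)\<in>G \<and> a<v \<and> v<b \<longrightarrow> (\<exists>q. (q,v)\<in>G)"
    proof (intro allI impI)
      fix a b v assume h: "(a,b)\<in>G \<and> a<v \<and> v<b"
      show "\<exists>q. (q,v)\<in>G"
      proof (cases "(a,b) \<in> E")
        case True
        then show ?thesis using pfD(4)[OF PE] h unfolding G_def by blast
      next
        case False
        hence ab: "a = p" "b = c0" using h G_def by auto
        then obtain q where q: "(q,v) \<in> F" using pfD(4)[OF PF] p h by blast
        have "(q,v) \<in> E" using least[of q v] q h ab by fastforce
        thus ?thesis unfolding G_def by blast
      qed
    qed
  qed
  moreover have "E \<subset> G" "G \<subseteq> F" using p EF G_def by auto
  moreover have "card G = Suc (card E)" using p pf_finite[OF PE] G_def by simp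
  ultimately show ?thesis by blast
qed


lemma chain_card: assumes MC: "maximal_chain (priority_lattice n) C" shows "card C = n + 2"
proof -
  have ch: "C \<subseteq> insert None (Some ` {E. pf n E})"
    and cmp: "\<And>x y. x\<in>C \<Longrightarrow> y\<in>C \<Longrightarrow> priority_le x y \<or> priority_le y x"
    using MC unfolding maximal_chain_def is_chain_def carrier_L le_L by blast+
  have mx: "\<And>D. D \<subseteq> insert None (Some ` {E. pf n E}) \<Longrightarrow> (\<forall>x\<in>D. \<forall>y\<in>D. priority_le x y \<or> priority_le y x) \<Longrightarrow> C \<subseteq> D \<Longrightarrow> D = C"
    using MC unfolding maximal_chain_def is_chain_def carrier_L le_L by blast
  have addok: "z \<in> C" if z: "z \<in> insert None (Some ` {E. pf n E})"
    and zc: "\<forall>y\<in>C. priority_le z y \<or> priority_le y z" for z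
  proof -
    have "priority_le z z" by (simp add: priority_le_def split: option.splits)
    hence "insert z C = C" using ch z zc cmp by (intro mx) auto
    thus "z \<in> C" by blast
  qed
  have NoneC: "None \<in> C" by (rule addok) (auto simp: priority_le_def)
  have "pf n {}" unfolding pf_def by simp
  hence EmC: "Some {} \<in> C" by (intro addok) (auto simp: priority_le_def split: option.splits)
  define W where "W = {E. Some E \<in> C}"
  have CW: "C = insert None (Some ` W)"
  proof
    show "C \<subseteq> insert None (Some ` W)"
    proof
      fix x assume "x \<in> C" thus "x \<in> insert None (Some ` W)" unfolding W_def by (cases x) auto
    qed
    show "insert None (Some ` W) \<subseteq> C" using NoneC W_def by auto
  qed
  have Wpf: "\<And>E. E \<in> W \<Longrightarrow> pf n E" using ch W_def by auto
  have "W \<subseteq> Pow ({0..n} \<times> {0..n})" using Wpf pfD(1) by blast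
  hence Wfin: "finite W" by (rule finite_subset) simp
  have Wcmp: "\<And>E F. E\<in>W \<Longrightarrow> F\<in>W \<Longrightarrow> E \<subseteq> F \<or> F \<subseteq> E"
    using cmp unfolding W_def by (fastforce simp: priority_le_def)
  have Weq: "\<And>E F. E\<in>W \<Longrightarrow> F\<in>W \<Longrightarrow> card E = card F \<Longrightarrow> E = F"
    using Wcmp Wpf pf_finite by (metis card_seteq order_refl)
  have cardC: "card C = Suc (card W)" using CW Wfin by (simp add: card_image)
  have inj: "inj_on card W" using Weq by (intro inj_onI)
  have img: "card ` W = {0..n}"
  proof
    show "card ` W \<subseteq> {0..n}" using Wpf pf_card by auto
    show "{0..n} \<subseteq> card ` W"
    proof (rule ccontr)
      assume "\<not> {0..n} \<subseteq> card ` W"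
      then obtain k where k: "k \<le> n" "k \<notin> card ` W" by (meson atLeastAtMost_iff subsetI zero_le)
      have "{} \<in> W" using EmC W_def by simp
      hence k0: "0 < k" using k by (metis card.empty gr0I image_eqI)
      define T where "T = {E\<in>W. card E < k}"
      have "{} \<in> T" using \<open>{}\<in>W\<close> k0 T_def by simp
      have Tfin: "finite T" using Wfin T_def by simp
      define m where "m = Max (card ` T)"
      have "m \<in> card ` T" unfolding m_def using Tfin \<open>{}\<in>T\<close> by (intro Max_in) auto
      then obtain E0 where E0: "E0 \<in> T" "card E0 = m" by auto
      have Tmax: "\<And>E. E \<in> T \<Longrightarrow> card E \<le> card E0" using Tfin E0 m_def by simp
      have E0W: "E0 \<in> W" "card E0 < k" using E0 T_def by auto
      have Tsub: "E \<subseteq> E0" if E: "E \<in> T" for E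
      proof (cases "E \<subseteq> E0")
        case False
        have EW: "E \<in> W" using E T_def by simp
        hence "E0 \<subseteq> E" using Wcmp E0W False by blast
        hence "E0 = E" using card_seteq[OF pf_finite[OF Wpf[OF EW]]] Tmax[OF E] by blast
        thus ?thesis by simp
      qed simp
      define U where "U = {F\<in>W. k < card F}"
      have WTU: "E\<in>T \<or> E\<in>U" if "E \<in> W" for E
      proof -
        have "card E \<noteq> k" using k(2) that by force
        thus ?thesis using that T_def U_def by auto
      qed
      have "\<exists>G. pf n G \<and> E0 \<subset> G \<and> card G = Suc (card E0) \<and> (\<forall>F\<in>U. G \<subseteq> F)"
      proof (cases "U = {}")
        case True
        have "card E0 < n" using E0W k by simp
        from ext1[OF Wpf[OF E0W(1)] this] obtain G where "pf n G \<and> E0 \<subset> G \<and> card G = Suc (card E0)"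
          by blast
        thus ?thesis using True by blast
      next
        case False
        have Ufin: "finite U" using Wfin U_def by simp
        define m' where "m' = Min (card ` U)"
        have "m' \<in> card ` U" unfolding m'_def using Ufin False by (intro Min_in) auto
        then obtain F0 where F0: "F0 \<in> U" "card F0 = m'" by auto
        have Umin: "\<And>F. F \<in> U \<Longrightarrow> card F0 \<le> card F" using Ufin F0 m'_def by simp
        have F0W: "F0 \<in> W" "k < card F0" using F0 U_def by auto
        have Usub: "F0 \<subseteq> F" if F: "F \<in> U" for F
        proof (cases "F0 \<subseteq> F")
          case False
          have FW: "F \<in> W" using F U_def by simp
          hence "F \<subseteq> F0" using Wcmp F0W False by blast
          hence "F = F0" using card_seteq[OF pf_finite[OF Wpf[OF F0W(1)]]] Umin[OF F] by blast
          thus ?thesis by simp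
        qed simp
        have "E0 \<subseteq> F0"
        proof (rule ccontr)
          assume "\<not> E0 \<subseteq> F0"
          hence "F0 \<subseteq> E0" using Wcmp E0W F0W by blast
          hence "card F0 \<le> card E0" by (rule card_mono[OF pf_finite[OF Wpf[OF E0W(1)]]])
          thus False using E0W F0W by simp
        qed
        moreover have "E0 \<noteq> F0" using E0W F0W by auto
        ultimately have "E0 \<subset> F0" by blast
        from ext2[OF Wpf[OF E0W(1)] Wpf[OF F0W(1)] this] obtain G where
          G: "pf n G" "E0 \<subset> G" "G \<subseteq> F0" "card G = Suc (card E0)" by blast
        thus ?thesis using Usub by blast
      qed
      then obtain G where G: "pf n G" "E0 \<subset> G" "card G = Suc (card E0)" "\<forall>F\<in>U. G \<subseteq> F" by blast
      have "Some G \<in> C"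
      proof (rule addok)
        show "Some G \<in> insert None (Some ` {E. pf n E})" using G by auto
        show "\<forall>y\<in>C. priority_le (Some G) y \<or> priority_le y (Some G)"
        proof
          fix y assume y: "y \<in> C"
          show "priority_le (Some G) y \<or> priority_le y (Some G)"
          proof (cases y)
            case None thus ?thesis by (simp add: priority_le_def)
          next
            case (Some E)
            hence "E \<in> W" using y W_def by simp
            hence "E \<in> T \<or> E \<in> U" by (rule WTU)
            thus ?thesis
            proof
              assume "E \<in> T" hence "E \<subseteq> G" using Tsub G by blast
              thus ?thesis using Some by (simp add: priority_le_def)
            next
              assume "E \<in> U" hence "G \<subseteq> E" using G by blast
              thus ?thesis using Some by (simp add: priority_le_def)
            qed
          qed
        qed
      qed
      hence GW: "G \<in> W" using W_def by simp
      have "card G \<noteq> k" using GW k(2) by force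
      hence "card G < k" using G E0W by simp
      hence "G \<in> T" using GW T_def by simp
      thus False using Tmax G by fastforce
    qed
  qed
  have "card W = n+1" using card_image[OF inj] img by simp
  thus ?thesis using cardC by simp
qed

theorem lemma3p1:
  fixes n :: nat
  shows "graded_lattice (priority_lattice n)"
  unfolding graded_lattice_def graded_def
proof (intro conjI allI impI lat)
  have "{E. pf n E} \<subseteq> Pow ({0..n} \<times> {0..n})" using pfD(1) by blast
  hence "finite {E. pf n E}" by (rule finite_subset) simp
  thus "finite (carrier (priority_lattice n))" unfolding carrier_L by simp
next
  fix C D assume "maximal_chain (priority_lattice n) C \<and> maximal_chain (priority_lattice n) D"
  thus "card C = card D" using chain_card by metis
qed

end
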